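(* For every symmetric monoidal restriction category $\mathbf C$, setting $\overline{[f,E]}=[\rho_A^{-1}\circ\overline f,\,I]$ for $[f,E]\colon A\to B$ gives a well-defined restriction structure on $\mathrm{Aux}(\mathbf C)$.
   Context: A restriction category is a category equipped with an assignment to each morphism $f\colon A\to B$ of an endomorphism $\overline{f}\colon A\to A$ such that (i) $f\circ\overline f=f$; (ii) $\overline f\circ\overline g=\overline g\circ\overline f$ whenever $f,g$ have a common domain; (iii) $\overline{g\circ\overline f}=\overline g\circ\overline f$ whenever $f,g$ have a common domain; (iv) $\overline g\circ f=f\circ\overline{g\circ f}$ whenever $g\circ f$ is defined. A morphism $f$ is total if $\overline f=\mathrm{id}$. A (symmetric) monoidal restriction category is a restriction category with a (symmetric) monoidal structure such that $\overline{f\otimes g}=\overline f\otimes\overline g$. Let $\mathbf C$ be a symmetric monoidal restriction category with tensor unit $I$, associator $\alpha$, left unitor $\lambda$, right unitor $\rho$. For morphisms $f\colon A\to B\otimes E$ and $f'\colon A\to B\otimes E'$ write $f\triangleright f'$ if $\overline f=\overline{f'}$ and there is a morphism $h\colon E\to E'$ with $(\mathrm{id}_B\otimes h)\circ f=f'$. Let $\sim$ be the equivalence relation generated by $\triangleright$ (on morphisms of the form $A\to B\otimes X$ for fixed $A,B$ and varying $X$). The category $\mathrm{Aux}(\mathbf C)$ has the objects of $\mathbf C$; a morphism $A\to B$ is a $\sim$-class $[f,E]$ of a morphism $f\colon A\to B\otimes E$ of $\mathbf C$; the composite of $[f,E]\colon A\to B$ and $[g,E']\colon B\to C$ is $[\alpha\circ(g\otimes\mathrm{id}_E)\circ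 f,\;E'\otimes E]$; the identity on $A$ is $[\rho_A^{-1},I]$. *)

theory Defs
  imports Main
begin

(* A (symmetric monoidal restriction) category presented by its data:
   objects of type 'o, morphisms of type 'm. cmp g f is "g after f". *)
record ('o, 'm) smrc =
  obj  :: "'o set"
  arr  :: "'m set"
  dm   :: "'m \<Rightarrow> 'o"
  cd   :: "'m \<Rightarrow> 'o"
  cmp  :: "'m \<Rightarrow> 'm \<Rightarrow> 'm"
  idm  :: "'o \<Rightarrow> 'm"
  tns  :: "'o \<Rightarrow> 'o \<Rightarrow> 'o"
  tnsa :: "'m \<Rightarrow> 'm \<Rightarrow> 'm"
  unt  :: "'o"
  asc  :: "'o \<Rightarrow> 'o \<Rightarrow> 'o \<Rightarrow> 'm"   (* (A(x)B)(x)C -> A(x)(B(x)C) *)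
  asci :: "'o \<Rightarrow> 'o \<Rightarrow> 'o \<Rightarrow> 'm"
  lu   :: "'o \<Rightarrow> 'm"                   (* I(x)A -> A *)
  lui  :: "'o \<Rightarrow> 'm"
  ru   :: "'o \<Rightarrow> 'm"                   (* A(x)I -> A *)
  rui  :: "'o \<Rightarrow> 'm"
  sy   :: "'o \<Rightarrow> 'o \<Rightarrow> 'm"            (* A(x)B -> B(x)A *)
  rst  :: "'m \<Rightarrow> 'm"

definition hom :: "('o, 'm) smrc \<Rightarrow> 'o \<Rightarrow> 'o \<Rightarrow> 'm set" where
  "hom C A B = {f \<in> arr C. dm C f = A \<and> cd C f = B}"

definition is_category :: "('o, 'm) smrc \<Rightarrow> bool" where
  "is_category C \<longleftrightarrow>
     (\<forall>A\<in>obj C. idm C A \<in> hom C A A) \<and>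
     (\<forall>f\<in>arr C. dm C f \<in> obj C \<and> cd C f \<in> obj C) \<and>
     (\<forall>f\<in>arr C. \<forall>g\<in>arr C. cd C f = dm C g \<longrightarrow> cmp C g f \<in> hom C (dm C f) (cd C g)) \<and>
     (\<forall>f\<in>arr C. cmp C f (idm C (dm C f)) = f \<and> cmp C (idm C (cd C f)) f = f) \<and>
     (\<forall>f\<in>arr C. \<forall>g\<in>arr C. \<forall>h\<in>arr C. cd C f = dm C g \<longrightarrow> cd C g = dm C h \<longrightarrow>
        cmp C h (cmp C g f) = cmp C (cmp C h g) f)"

definition is_iso_pair :: "('o, 'm) smrc \<Rightarrow> 'o \<Rightarrow> 'o \<Rightarrow> 'm \<Rightarrow> 'm \<Rightarrow> bool" where
  "is_iso_pair C A B u v \<longleftrightarrow> u \<in> hom C A B \<and> v \<in> hom C B A \<and>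
     cmp C v u = idm C A \<and> cmp C u v = idm C B"

definition is_sym_monoidal :: "('o, 'm) smrc \<Rightarrow> bool" where
  "is_sym_monoidal C \<longleftrightarrow>
     is_category C \<and>
     unt C \<in> obj C \<and>
     (\<forall>A\<in>obj C. \<forall>B\<in>obj C. tns C A B \<in> obj C) \<and>
     \<comment> \<open>tensor is a bifunctor\<close>
     (\<forall>f\<in>arr C. \<forall>g\<in>arr C.
        tnsa C f g \<in> hom C (tns C (dm C f) (dm C g)) (tns C (cd C f) (cd C g))) \<and>
     (\<forall>A\<in>obj C. \<forall>B\<in>obj C. tnsa C (idm C A) (idm C B) = idm C (tns C A B)) \<and>
     (\<forall>f\<in>arr C. \<forall>g\<in>arr C. \<forall>f'\<in>arr C. \<forall>g'\<in>arr C.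
        cd C f = dm C g \<longrightarrow> cd C f' = dm C g' \<longrightarrow>
        tnsa C (cmp C g f) (cmp C g' f') = cmp C (tnsa C g g') (tnsa C f f')) \<and>
     \<comment> \<open>structural isomorphisms\<close>
     (\<forall>A\<in>obj C. \<forall>B\<in>obj C. \<forall>D\<in>obj C.
        is_iso_pair C (tns C (tns C A B) D) (tns C A (tns C B D)) (asc C A B D) (asci C A B D)) \<and>
     (\<forall>A\<in>obj C. is_iso_pair C (tns C (unt C) A) A (lu C A) (lui C A)) \<and>
     (\<forall>A\<in>obj C. is_iso_pair C (tns C A (unt C)) A (ru C A) (rui C A)) \<and>
     (\<forall>A\<in>obj C. \<forall>B\<in>obj C. sy C A B \<in> hom C (tns C A B) (tns C B A)) \<and>
     \<comment> \<open>naturality\<close>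
     (\<forall>f\<in>arr C. \<forall>g\<in>arr C. \<forall>h\<in>arr C.
        cmp C (asc C (cd C f) (cd C g) (cd C h)) (tnsa C (tnsa C f g) h)
        = cmp C (tnsa C f (tnsa C g h)) (asc C (dm C f) (dm C g) (dm C h))) \<and>
     (\<forall>f\<in>arr C. cmp C (lu C (cd C f)) (tnsa C (idm C (unt C)) f) = cmp C f (lu C (dm C f))) \<and>
     (\<forall>f\<in>arr C. cmp C (ru C (cd C f)) (tnsa C f (idm C (unt C))) = cmp C f (ru C (dm C f))) \<and>
     (\<forall>f\<in>arr C. \<forall>g\<in>arr C.
        cmp C (sy C (cd C f) (cd C g)) (tnsa C f g) = cmp C (tnsa C g f) (sy C (dm C f) (dm C g))) \<and>
     \<comment> \<open>coherence: triangle, pentagon, symmetry, hexagon\<close>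
     (\<forall>A\<in>obj C. \<forall>B\<in>obj C.
        cmp C (tnsa C (idm C A) (lu C B)) (asc C A (unt C) B) = tnsa C (ru C A) (idm C B)) \<and>
     (\<forall>A\<in>obj C. \<forall>B\<in>obj C. \<forall>D\<in>obj C. \<forall>E\<in>obj C.
        cmp C (asc C A B (tns C D E)) (asc C (tns C A B) D E)
        = cmp C (tnsa C (idm C A) (asc C B D E))
            (cmp C (asc C A (tns C B D) E) (tnsa C (asc C A B D) (idm C E)))) \<and>
     (\<forall>A\<in>obj C. \<forall>B\<in>obj C. cmp C (sy C B A) (sy C A B) = idm C (tns C A B)) \<and>
     (\<forall>A\<in>obj C. \<forall>B\<in>obj C. \<forall>D\<in>obj C.
        cmp C (asc C B D A) (cmp C (sy C A (tns C B D)) (asc C A B D))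
        = cmp C (tnsa C (idm C B) (sy C A D))
            (cmp C (asc C B A D) (tnsa C (sy C A B) (idm C D))))"

definition restriction_structure ::
  "'a set \<Rightarrow> ('a \<Rightarrow> 'b) \<Rightarrow> ('a \<Rightarrow> 'b) \<Rightarrow> ('a \<Rightarrow> 'a \<Rightarrow> 'a) \<Rightarrow> ('a \<Rightarrow> 'a) \<Rightarrow> bool" where
  "restriction_structure Ar d c co r \<longleftrightarrow>
     (\<forall>f\<in>Ar. r f \<in> Ar \<and> d (r f) = d f \<and> c (r f) = d f) \<and>
     (\<forall>f\<in>Ar. co f (r f) = f) \<and>
     (\<forall>f\<in>Ar. \<forall>g\<in>Ar. d f = d g \<longrightarrow> co (r f) (r g) = co (r g) (r f)) \<and>
     (\<forall>f\<in>Ar. \<forall>g\<in>Ar. d f = d g \<longrightarrow> r (co g (r f)) = co (r g) (r f)) \<and>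
     (\<forall>f\<in>Ar. \<forall>g\<in>Ar. d g = c f \<longrightarrow> co (r g) f = co f (r (co g f)))"

definition is_smrc :: "('o, 'm) smrc \<Rightarrow> bool" where
  "is_smrc C \<longleftrightarrow> is_sym_monoidal C \<and>
     restriction_structure (arr C) (dm C) (cd C) (cmp C) (rst C) \<and>
     (\<forall>f\<in>arr C. \<forall>g\<in>arr C. rst C (tnsa C f g) = tnsa C (rst C f) (rst C g))"

definition aux_tri :: "('o, 'm) smrc \<Rightarrow> 'o \<Rightarrow> 'o \<Rightarrow> 'm \<times> 'o \<Rightarrow> 'm \<times> 'o \<Rightarrow> bool" where
  "aux_tri C A B p q \<longleftrightarrow>
     snd p \<in> obj C \<and> snd q \<in> obj C \<and>
     fst p \<in> hom C A (tns C B (snd p)) \<and> fst q \<in> hom C A (tns C B (snd q)) \<and>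
     rst C (fst p) = rst C (fst q) \<and>
     (\<exists>h\<in>hom C (snd p) (snd q). cmp C (tnsa C (idm C B) h) (fst p) = fst q)"

definition aux_sim :: "('o, 'm) smrc \<Rightarrow> 'o \<Rightarrow> 'o \<Rightarrow> 'm \<times> 'o \<Rightarrow> 'm \<times> 'o \<Rightarrow> bool" where
  "aux_sim C A B = (\<lambda>p q. aux_tri C A B p q \<or> aux_tri C A B q p)\<^sup>*\<^sup>*"

definition aux_class :: "('o, 'm) smrc \<Rightarrow> 'o \<Rightarrow> 'o \<Rightarrow> 'm \<times> 'o \<Rightarrow> ('m \<times> 'o) set" where
  "aux_class C A B p = {q. aux_sim C A B p q}"

(* A morphism of Aux(C) is (A, B, [f,E]) *)
type_synonym ('o, 'm) auxm = "'o \<times> 'o \<times> ('m \<times> 'o) set"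

definition aux_arr :: "('o, 'm) smrc \<Rightarrow> ('o, 'm) auxm set" where
  "aux_arr C = {(A, B, aux_class C A B (f, E)) | A B f E.
      A \<in> obj C \<and> B \<in> obj C \<and> E \<in> obj C \<and> f \<in> hom C A (tns C B E)}"

definition aux_dom :: "('o, 'm) auxm \<Rightarrow> 'o" where
  "aux_dom x = fst x"

definition aux_cod :: "('o, 'm) auxm \<Rightarrow> 'o" where
  "aux_cod x = fst (snd x)"

definition aux_rep :: "('o, 'm) auxm \<Rightarrow> 'm \<times> 'o" where
  "aux_rep x = (SOME p. p \<in> snd (snd x))"

definition aux_comp :: "('o, 'm) smrc \<Rightarrow> ('o, 'm) auxm \<Rightarrow> ('o, 'm) auxm \<Rightarrow> ('o, 'm) auxm" where
  "aux_comp C y x =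
     (let (f, E) = aux_rep x; (g, E') = aux_rep y; A = aux_dom x; D = aux_cod y in
      (A, D, aux_class C A D
         (cmp C (asc C D E' E) (cmp C (tnsa C g (idm C E)) f), tns C E' E)))"

definition aux_id :: "('o, 'm) smrc \<Rightarrow> 'o \<Rightarrow> ('o, 'm) auxm" where
  "aux_id C A = (A, A, aux_class C A A (rui C A, unt C))"

definition aux_rst :: "('o, 'm) smrc \<Rightarrow> ('o, 'm) auxm \<Rightarrow> ('o, 'm) auxm" where
  "aux_rst C x =
     (let A = aux_dom x; f = fst (aux_rep x) in
      (A, A, aux_class C A A (cmp C (rui C A) (rst C f), unt C)))"

end

theory Submission
  imports Defs
begin
locale SM =
  fixes C :: "('o, 'm) smrc"
  assumes smrc: "is_smrc C"
begin

abbreviation Ob where "Ob \<equiv> obj C"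
abbreviation Ar where "Ar \<equiv> arr C"
abbreviation d where "d \<equiv> dm C"
abbreviation c where "c \<equiv> cd C"
abbreviation cm (infixr "\<cdot>" 55) where "g \<cdot> f \<equiv> cmp C g f"
abbreviation ide where "ide \<equiv> idm C"
abbreviation TT where "TT \<equiv> tns C"
abbreviation tm (infixr "\<otimes>" 60) where "f \<otimes> g \<equiv> tnsa C f g"
abbreviation I where "I \<equiv> unt C"
abbreviation r where "r \<equiv> rst C"

lemma SMC: "is_sym_monoidal C" using smrc unfolding is_smrc_def by blast
lemma CAT: "is_category C" using SMC unfolding is_sym_monoidal_def by blast
lemma RS: "restriction_structure Ar d c (cmp C) r" using smrc unfolding is_smrc_def by blast

lemmas CATu = CAT[unfolded is_category_def]
lemma CAT1: "\<forall>A\<in>Ob. ide A \<in> hom C A A"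
  using CATu by blast
lemma CAT2: "\<forall>f\<in>Ar. d f \<in> Ob \<and> c f \<in> Ob"
  using CATu by blast
lemma CAT3: "\<forall>f\<in>Ar. \<forall>g\<in>Ar. c f = d g \<longrightarrow> g \<cdot> f \<in> hom C (d f) (c g)"
  using CATu by blast
lemma CAT4: "\<forall>f\<in>Ar. f \<cdot> (ide (d f)) = f \<and> ide (c f) \<cdot> f = f"
  using CATu by blast
lemma CAT5: "\<forall>f\<in>Ar. \<forall>g\<in>Ar. \<forall>h\<in>Ar. c f = d g \<longrightarrow> c g = d h \<longrightarrow> h \<cdot> (g \<cdot> f) = (h \<cdot> g) \<cdot> f"
  using CATu by blast


lemma ide_ar[simp]: "A \<in> Ob \<Longrightarrow> ide A \<in> Ar" and ide_d[simp]: "A \<in> Ob \<Longrightarrow> d (ide A) = A"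
  and ide_c[simp]: "A \<in> Ob \<Longrightarrow> c (ide A) = A"
  using CAT1 unfolding hom_def by auto

lemma d_ob[simp]: "f \<in> Ar \<Longrightarrow> d f \<in> Ob" and c_ob[simp]: "f \<in> Ar \<Longrightarrow> c f \<in> Ob"
  using CAT2 by auto

lemma cm_ar[simp]: "f \<in> Ar \<Longrightarrow> g \<in> Ar \<Longrightarrow> c f = d g \<Longrightarrow> g \<cdot> f \<in> Ar"
  and cm_d[simp]: "f \<in> Ar \<Longrightarrow> g \<in> Ar \<Longrightarrow> c f = d g \<Longrightarrow> d (g \<cdot> f) = d f"
  and cm_c[simp]: "f \<in> Ar \<Longrightarrow> g \<in> Ar \<Longrightarrow> c f = d g \<Longrightarrow> c (g \<cdot> f) = c g"
  using CAT3 unfolding hom_def by auto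

lemma cm_idr[simp]: "f \<in> Ar \<Longrightarrow> A = d f \<Longrightarrow> f \<cdot> ide A = f"
  and cm_idl[simp]: "f \<in> Ar \<Longrightarrow> B = c f \<Longrightarrow> ide B \<cdot> f = f"
  using CAT4 by auto

lemma assoc[simp]: "f \<in> Ar \<Longrightarrow> g \<in> Ar \<Longrightarrow> h \<in> Ar \<Longrightarrow> c f = d g \<Longrightarrow> c g = d h \<Longrightarrow>
   (h \<cdot> g) \<cdot> f = h \<cdot> (g \<cdot> f)"
  using CAT5 by metis

lemmas SMu = SMC[unfolded is_sym_monoidal_def]
lemma SM1: "unt C \<in> obj C"
  by (rule SMu[THEN conjunct2, THEN conjunct1])
lemma SM2: "(\<forall>A\<in>obj C. \<forall>B\<in>obj C. tns C A B \<in> obj C)"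
  by (rule SMu[THEN conjunct2, THEN conjunct2, THEN conjunct1])
lemma SM3: "(\<forall>f\<in>arr C. \<forall>g\<in>arr C.
        tnsa C f g \<in> hom C (tns C (dm C f) (dm C g)) (tns C (cd C f) (cd C g)))"
  by (rule SMu[THEN conjunct2, THEN conjunct2, THEN conjunct2, THEN conjunct1])
lemma SM4: "(\<forall>A\<in>obj C. \<forall>B\<in>obj C. tnsa C (idm C A) (idm C B) = idm C (tns C A B))"
  by (rule SMu[THEN conjunct2, THEN conjunct2, THEN conjunct2, THEN conjunct2, THEN conjunct1])
lemma SM5: "(\<forall>f\<in>arr C. \<forall>g\<in>arr C. \<forall>f'\<in>arr C. \<forall>g'\<in>arr C.
        cd C f = dm C g \<longrightarrow> cd C f' = dm C g' \<longrightarrow>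
        tnsa C (cmp C g f) (cmp C g' f') = cmp C (tnsa C g g') (tnsa C f f'))"
  by (rule SMu[THEN conjunct2, THEN conjunct2, THEN conjunct2, THEN conjunct2, THEN conjunct2, THEN conjunct1])
lemma SM6: "(\<forall>A\<in>obj C. \<forall>B\<in>obj C. \<forall>D\<in>obj C.
        is_iso_pair C (tns C (tns C A B) D) (tns C A (tns C B D)) (asc C A B D) (asci C A B D))"
  by (rule SMu[THEN conjunct2, THEN conjunct2, THEN conjunct2, THEN conjunct2, THEN conjunct2, THEN conjunct2, THEN conjunct1])
lemma SM7: "(\<forall>A\<in>obj C. is_iso_pair C (tns C (unt C) A) A (lu C A) (lui C A))"
  by (rule SMu[THEN conjunct2, THEN conjunct2, THEN conjunct2, THEN conjunct2, THEN conjunct2, THEN conjunct2, THEN conjunct2, THEN conjunct1])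
lemma SM8: "(\<forall>A\<in>obj C. is_iso_pair C (tns C A (unt C)) A (ru C A) (rui C A))"
  by (rule SMu[THEN conjunct2, THEN conjunct2, THEN conjunct2, THEN conjunct2, THEN conjunct2, THEN conjunct2, THEN conjunct2, THEN conjunct2, THEN conjunct1])
lemma SM9: "(\<forall>A\<in>obj C. \<forall>B\<in>obj C. sy C A B \<in> hom C (tns C A B) (tns C B A))"
  by (rule SMu[THEN conjunct2, THEN conjunct2, THEN conjunct2, THEN conjunct2, THEN conjunct2, THEN conjunct2, THEN conjunct2, THEN conjunct2, THEN conjunct2, THEN conjunct1])
lemma SM10: "(\<forall>f\<in>arr C. \<forall>g\<in>arr C. \<forall>h\<in>arr C.
        cmp C (asc C (cd C f) (cd C g) (cd C h)) (tnsa C (tnsa C f g) h)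
        = cmp C (tnsa C f (tnsa C g h)) (asc C (dm C f) (dm C g) (dm C h)))"
  by (rule SMu[THEN conjunct2, THEN conjunct2, THEN conjunct2, THEN conjunct2, THEN conjunct2, THEN conjunct2, THEN conjunct2, THEN conjunct2, THEN conjunct2, THEN conjunct2, THEN conjunct1])
lemma SM11: "(\<forall>f\<in>arr C. cmp C (lu C (cd C f)) (tnsa C (idm C (unt C)) f) = cmp C f (lu C (dm C f)))"
  by (rule SMu[THEN conjunct2, THEN conjunct2, THEN conjunct2, THEN conjunct2, THEN conjunct2, THEN conjunct2, THEN conjunct2, THEN conjunct2, THEN conjunct2, THEN conjunct2, THEN conjunct2, THEN conjunct1])
lemma SM12: "(\<forall>f\<in>arr C. cmp C (ru C (cd C f)) (tnsa C f (idm C (unt C))) = cmp C f (ru C (dm C f)))"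
  by (rule SMu[THEN conjunct2, THEN conjunct2, THEN conjunct2, THEN conjunct2, THEN conjunct2, THEN conjunct2, THEN conjunct2, THEN conjunct2, THEN conjunct2, THEN conjunct2, THEN conjunct2, THEN conjunct2, THEN conjunct1])
lemma SM13: "(\<forall>f\<in>arr C. \<forall>g\<in>arr C.
        cmp C (sy C (cd C f) (cd C g)) (tnsa C f g) = cmp C (tnsa C g f) (sy C (dm C f) (dm C g)))"
  by (rule SMu[THEN conjunct2, THEN conjunct2, THEN conjunct2, THEN conjunct2, THEN conjunct2, THEN conjunct2, THEN conjunct2, THEN conjunct2, THEN conjunct2, THEN conjunct2, THEN conjunct2, THEN conjunct2, THEN conjunct2, THEN conjunct1])
lemma SM14: "(\<forall>A\<in>obj C. \<forall>B\<in>obj C.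
        cmp C (tnsa C (idm C A) (lu C B)) (asc C A (unt C) B) = tnsa C (ru C A) (idm C B))"
  by (rule SMu[THEN conjunct2, THEN conjunct2, THEN conjunct2, THEN conjunct2, THEN conjunct2, THEN conjunct2, THEN conjunct2, THEN conjunct2, THEN conjunct2, THEN conjunct2, THEN conjunct2, THEN conjunct2, THEN conjunct2, THEN conjunct2, THEN conjunct1])
lemma SM15: "(\<forall>A\<in>obj C. \<forall>B\<in>obj C. \<forall>D\<in>obj C. \<forall>E\<in>obj C.
        cmp C (asc C A B (tns C D E)) (asc C (tns C A B) D E)
        = cmp C (tnsa C (idm C A) (asc C B D E))
            (cmp C (asc C A (tns C B D) E) (tnsa C (asc C A B D) (idm C E))))"
  by (rule SMu[THEN conjunct2, THEN conjunct2, THEN conjunct2, THEN conjunct2, THEN conjunct2, THEN conjunct2, THEN conjunct2, THEN conjunct2, THEN conjunct2, THEN conjunct2, THEN conjunct2, THEN conjunct2, THEN conjunct2, THEN conjunct2, THEN conjunct2, THEN conjunct1])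
lemma SM16: "(\<forall>A\<in>obj C. \<forall>B\<in>obj C. cmp C (sy C B A) (sy C A B) = idm C (tns C A B))"
  by (rule SMu[THEN conjunct2, THEN conjunct2, THEN conjunct2, THEN conjunct2, THEN conjunct2, THEN conjunct2, THEN conjunct2, THEN conjunct2, THEN conjunct2, THEN conjunct2, THEN conjunct2, THEN conjunct2, THEN conjunct2, THEN conjunct2, THEN conjunct2, THEN conjunct2, THEN conjunct1])
lemma SM17: "(\<forall>A\<in>obj C. \<forall>B\<in>obj C. \<forall>D\<in>obj C.
        cmp C (asc C B D A) (cmp C (sy C A (tns C B D)) (asc C A B D))
        = cmp C (tnsa C (idm C B) (sy C A D))
            (cmp C (asc C B A D) (tnsa C (sy C A B) (idm C D))))"
  by (rule SMu[THEN conjunct2, THEN conjunct2, THEN conjunct2, THEN conjunct2, THEN conjunct2, THEN conjunct2, THEN conjunct2, THEN conjunct2, THEN conjunct2, THEN conjunct2, THEN conjunct2, THEN conjunct2, THEN conjunct2, THEN conjunct2, THEN conjunct2, THEN conjunct2, THEN conjunct2])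


lemma unt_ob[simp]: "I \<in> Ob" and TT_ob[simp]: "A \<in> Ob \<Longrightarrow> B \<in> Ob \<Longrightarrow> TT A B \<in> Ob"
  using SM1 SM2 by auto

lemma tm_ar[simp]: "f \<in> Ar \<Longrightarrow> g \<in> Ar \<Longrightarrow> f \<otimes> g \<in> Ar"
  and tm_d[simp]: "f \<in> Ar \<Longrightarrow> g \<in> Ar \<Longrightarrow> d (f \<otimes> g) = TT (d f) (d g)"
  and tm_c[simp]: "f \<in> Ar \<Longrightarrow> g \<in> Ar \<Longrightarrow> c (f \<otimes> g) = TT (c f) (c g)"
  using SM3 unfolding hom_def by auto

lemma tm_id[simp]: "A \<in> Ob \<Longrightarrow> B \<in> Ob \<Longrightarrow> ide A \<otimes> ide B = ide (TT A B)"
  using SM4 by auto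

lemma interchange: "f \<in> Ar \<Longrightarrow> g \<in> Ar \<Longrightarrow> f' \<in> Ar \<Longrightarrow> g' \<in> Ar \<Longrightarrow> c f = d g \<Longrightarrow> c f' = d g' \<Longrightarrow>
   (g \<otimes> g') \<cdot> (f \<otimes> f') = (g \<cdot> f) \<otimes> (g' \<cdot> f')"
  using SM5 by auto

lemma asc_iso: "A \<in> Ob \<Longrightarrow> B \<in> Ob \<Longrightarrow> D \<in> Ob \<Longrightarrow> is_iso_pair C (TT (TT A B) D) (TT A (TT B D)) (asc C A B D) (asci C A B D)"
  using SM6 by auto
lemma lu_iso: "A \<in> Ob \<Longrightarrow> is_iso_pair C (TT I A) A (lu C A) (lui C A)"
  using SM7 by auto
lemma ru_iso: "A \<in> Ob \<Longrightarrow> is_iso_pair C (TT A I) A (ru C A) (rui C A)"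
  using SM8 by auto

lemma asc_ar[simp]: "A \<in> Ob \<Longrightarrow> B \<in> Ob \<Longrightarrow> D \<in> Ob \<Longrightarrow> asc C A B D \<in> Ar"
 and asc_d[simp]: "A \<in> Ob \<Longrightarrow> B \<in> Ob \<Longrightarrow> D \<in> Ob \<Longrightarrow> d (asc C A B D) = TT (TT A B) D"
 and asc_c[simp]: "A \<in> Ob \<Longrightarrow> B \<in> Ob \<Longrightarrow> D \<in> Ob \<Longrightarrow> c (asc C A B D) = TT A (TT B D)"
 and asci_ar[simp]: "A \<in> Ob \<Longrightarrow> B \<in> Ob \<Longrightarrow> D \<in> Ob \<Longrightarrow> asci C A B D \<in> Ar"
 and asci_d[simp]: "A \<in> Ob \<Longrightarrow> B \<in> Ob \<Longrightarrow> D \<in> Ob \<Longrightarrow> d (asci C A B D) = TT A (TT B D)"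
 and asci_c[simp]: "A \<in> Ob \<Longrightarrow> B \<in> Ob \<Longrightarrow> D \<in> Ob \<Longrightarrow> c (asci C A B D) = TT (TT A B) D"
 and asc_inv1: "A \<in> Ob \<Longrightarrow> B \<in> Ob \<Longrightarrow> D \<in> Ob \<Longrightarrow> asci C A B D \<cdot> asc C A B D = ide (TT (TT A B) D)"
 and asc_inv2: "A \<in> Ob \<Longrightarrow> B \<in> Ob \<Longrightarrow> D \<in> Ob \<Longrightarrow> asc C A B D \<cdot> asci C A B D = ide (TT A (TT B D))"
  using asc_iso[of A B D] unfolding is_iso_pair_def hom_def by auto

lemma lu_ar[simp]: "A \<in> Ob \<Longrightarrow> lu C A \<in> Ar" and lu_d[simp]: "A \<in> Ob \<Longrightarrow> d (lu C A) = TT I A"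
 and lu_c[simp]: "A \<in> Ob \<Longrightarrow> c (lu C A) = A"
 and lui_ar[simp]: "A \<in> Ob \<Longrightarrow> lui C A \<in> Ar" and lui_d[simp]: "A \<in> Ob \<Longrightarrow> d (lui C A) = A"
 and lui_c[simp]: "A \<in> Ob \<Longrightarrow> c (lui C A) = TT I A"
 and lu_inv1: "A \<in> Ob \<Longrightarrow> lui C A \<cdot> lu C A = ide (TT I A)"
 and lu_inv2: "A \<in> Ob \<Longrightarrow> lu C A \<cdot> lui C A = ide A"
  using lu_iso[of A] unfolding is_iso_pair_def hom_def by auto

lemma ru_ar[simp]: "A \<in> Ob \<Longrightarrow> ru C A \<in> Ar" and ru_d[simp]: "A \<in> Ob \<Longrightarrow> d (ru C A) = TT A I"
 and ru_c[simp]: "A \<in> Ob \<Longrightarrow> c (ru C A) = A"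
 and rui_ar[simp]: "A \<in> Ob \<Longrightarrow> rui C A \<in> Ar" and rui_d[simp]: "A \<in> Ob \<Longrightarrow> d (rui C A) = A"
 and rui_c[simp]: "A \<in> Ob \<Longrightarrow> c (rui C A) = TT A I"
 and ru_inv1: "A \<in> Ob \<Longrightarrow> rui C A \<cdot> ru C A = ide (TT A I)"
 and ru_inv2: "A \<in> Ob \<Longrightarrow> ru C A \<cdot> rui C A = ide A"
  using ru_iso[of A] unfolding is_iso_pair_def hom_def by auto

lemma asc_nat: "f \<in> Ar \<Longrightarrow> g \<in> Ar \<Longrightarrow> h \<in> Ar \<Longrightarrow>
   asc C (c f) (c g) (c h) \<cdot> ((f \<otimes> g) \<otimes> h) = (f \<otimes> (g \<otimes> h)) \<cdot> asc C (d f) (d g) (d h)"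
  using SM10 by auto
lemma ru_nat: "f \<in> Ar \<Longrightarrow> ru C (c f) \<cdot> (f \<otimes> ide I) = f \<cdot> ru C (d f)"
  using SM12 by auto
lemma lu_nat: "f \<in> Ar \<Longrightarrow> lu C (c f) \<cdot> (ide I \<otimes> f) = f \<cdot> lu C (d f)"
  using SM11 by auto
lemma triangle: "A \<in> Ob \<Longrightarrow> B \<in> Ob \<Longrightarrow> (ide A \<otimes> lu C B) \<cdot> asc C A I B = ru C A \<otimes> ide B"
  using SM14 by auto
lemma pentagon: "A \<in> Ob \<Longrightarrow> B \<in> Ob \<Longrightarrow> D \<in> Ob \<Longrightarrow> E \<in> Ob \<Longrightarrow>
        asc C A B (TT D E) \<cdot> asc C (TT A B) D E
        = (ide A \<otimes> asc C B D E) \<cdot> (asc C A (TT B D) E \<cdot> (asc C A B D \<otimes> ide E))"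
  using SM15 by auto

lemmas RSu = RS[unfolded restriction_structure_def]
lemma r_ar[simp]: "f \<in> Ar \<Longrightarrow> r f \<in> Ar" and r_d[simp]: "f \<in> Ar \<Longrightarrow> d (r f) = d f"
  and r_c[simp]: "f \<in> Ar \<Longrightarrow> c (r f) = d f"
  using RSu by blast+
lemma R1[simp]: "f \<in> Ar \<Longrightarrow> f \<cdot> r f = f"
  using RSu by blast
lemma R2: "f \<in> Ar \<Longrightarrow> g \<in> Ar \<Longrightarrow> d f = d g \<Longrightarrow> r f \<cdot> r g = r g \<cdot> r f"
  using RSu by blast
lemma R3: "f \<in> Ar \<Longrightarrow> g \<in> Ar \<Longrightarrow> d f = d g \<Longrightarrow> r (g \<cdot> r f) = r g \<cdot> r f"
  using RSu by blast
lemma R4: "f \<in> Ar \<Longrightarrow> g \<in> Ar \<Longrightarrow> d g = c f \<Longrightarrow> r g \<cdot> f = f \<cdot> r (g \<cdot> f)"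
  using RSu by blast
lemma r_tm[simp]: "f \<in> Ar \<Longrightarrow> g \<in> Ar \<Longrightarrow> r (f \<otimes> g) = r f \<otimes> r g"
  using smrc unfolding is_smrc_def by blast

end

context SM begin

lemma cm_rew: "p \<cdot> q = s \<Longrightarrow> q \<in> Ar \<Longrightarrow> p \<in> Ar \<Longrightarrow> t \<in> Ar \<Longrightarrow> c q = d p \<Longrightarrow> c t = d q \<Longrightarrow> p \<cdot> (q \<cdot> t) = s \<cdot> t"
  by (metis assoc)

lemma r_ide[simp]: "A \<in> Ob \<Longrightarrow> r (ide A) = ide A"
  by (metis R1 cm_idl ide_ar ide_d r_ar r_c)

lemma r_r[simp]: "f \<in> Ar \<Longrightarrow> r (r f) = r f"
proof -
  assume f: "f \<in> Ar"
  have "r (ide (d f) \<cdot> r f) = r (ide (d f)) \<cdot> r f" using f by (intro R3) auto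
  thus ?thesis using f by simp
qed

lemma r_idem[simp]: "f \<in> Ar \<Longrightarrow> r f \<cdot> r f = r f"
  by (metis R1 r_ar r_r)

lemma r_absorb: assumes "f \<in> Ar" "g \<in> Ar" "c f = d g"
  shows "r (g \<cdot> f) \<cdot> r f = r (g \<cdot> f)" "r f \<cdot> r (g \<cdot> f) = r (g \<cdot> f)"
proof -
  have "r ((g \<cdot> f) \<cdot> r f) = r (g \<cdot> f) \<cdot> r f" using assms by (intro R3) auto
  moreover have "(g \<cdot> f) \<cdot> r f = g \<cdot> f" using assms by simp
  ultimately show 1: "r (g \<cdot> f) \<cdot> r f = r (g \<cdot> f)" by simp
  have "r f \<cdot> r (g \<cdot> f) = r (g \<cdot> f) \<cdot> r f" using assms by (intro R2) auto
  thus "r f \<cdot> r (g \<cdot> f) = r (g \<cdot> f)" using 1 by simp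
qed

lemma rL: assumes "u \<in> Ar" "v \<in> Ar" "c v = d u"
  shows "r (r u \<cdot> v) = r (u \<cdot> v)"
proof -
  have "r u \<cdot> v = v \<cdot> r (u \<cdot> v)" using assms by (intro R4) auto
  moreover have "r (v \<cdot> r (u \<cdot> v)) = r v \<cdot> r (u \<cdot> v)" using assms by (intro R3) auto
  ultimately show ?thesis using r_absorb(2)[OF assms(2,1,3)] by simp
qed

lemma r_total: assumes "k \<in> Ar" "m \<in> Ar" "c m = d k" "r k = ide (d k)"
  shows "r (k \<cdot> m) = r m"
  using rL[OF assms(1-3)] assms by simp

lemma iso_total: assumes "u \<in> Ar" "v \<in> Ar" "c u = d v" "v \<cdot> u = ide (d u)"
  shows "r u = ide (d u)"
proof -
  have "r u = ide (d u) \<cdot> r u" using assms by simp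
  also have "\<dots> = (v \<cdot> u) \<cdot> r u" using assms by simp
  also have "\<dots> = v \<cdot> u" using assms(1-3) by simp
  also have "\<dots> = ide (d u)" by (rule assms(4))
  finally show ?thesis .
qed

lemma r_asc[simp]: "A \<in> Ob \<Longrightarrow> B \<in> Ob \<Longrightarrow> D \<in> Ob \<Longrightarrow> r (asc C A B D) = ide (TT (TT A B) D)"
  using iso_total[of "asc C A B D" "asci C A B D"] asc_inv1 by simp
lemma r_rui[simp]: "A \<in> Ob \<Longrightarrow> r (rui C A) = ide A"
  using iso_total[of "rui C A" "ru C A"] ru_inv2 by simp
lemma r_ru[simp]: "A \<in> Ob \<Longrightarrow> r (ru C A) = ide (TT A I)"
  using iso_total[of "ru C A" "rui C A"] ru_inv1 by simp

lemma faith: assumes "u \<in> Ar" "v \<in> Ar" "d u = d v" "c u = c v" "u \<otimes> ide I = v \<otimes> ide I"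
  shows "u = v"
proof -
  have "u = u \<cdot> (ru C (d u) \<cdot> rui C (d u))" using assms ru_inv2 by simp
  also have "\<dots> = (u \<cdot> ru C (d u)) \<cdot> rui C (d u)" using assms by simp
  also have "\<dots> = (ru C (c u) \<cdot> (u \<otimes> ide I)) \<cdot> rui C (d u)" by (simp only: ru_nat[OF assms(1)])
  also have "\<dots> = (ru C (c v) \<cdot> (v \<otimes> ide I)) \<cdot> rui C (d v)" using assms by simp
  also have "\<dots> = (v \<cdot> ru C (d v)) \<cdot> rui C (d v)" by (simp only: ru_nat[OF assms(2)])
  also have "\<dots> = v" using assms ru_inv2 by simp
  finally show ?thesis .
qed

end

context SM begin

lemma kelly: assumes X: "X \<in> Ob" and Y: "Y \<in> Ob"
  shows "(ide X \<otimes> ru C Y) \<cdot> asc C X Y I = ru C (TT X Y)"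
proof -
  let ?W = I
  let ?a = "asc C"
  define M where "M = ide X \<otimes> (ide Y \<otimes> lu C ?W)"
  have P: "?a X Y (TT I ?W) \<cdot> ?a (TT X Y) I ?W
        = (ide X \<otimes> ?a Y I ?W) \<cdot> (?a X (TT Y I) ?W \<cdot> (?a X Y I \<otimes> ide ?W))"
    using pentagon X Y by simp
  have N1: "?a X Y ?W \<cdot> ((ide X \<otimes> ide Y) \<otimes> lu C ?W) = M \<cdot> ?a X Y (TT I ?W)"
    using asc_nat[of "ide X" "ide Y" "lu C ?W"] X Y unfolding M_def by simp
  have L: "M \<cdot> (?a X Y (TT I ?W) \<cdot> ?a (TT X Y) I ?W) = ?a X Y ?W \<cdot> (ru C (TT X Y) \<otimes> ide ?W)"
  proof -
    have "M \<cdot> (?a X Y (TT I ?W) \<cdot> ?a (TT X Y) I ?W) = (?a X Y ?W \<cdot> ((ide X \<otimes> ide Y) \<otimes> lu C ?W)) \<cdot> ?a (TT X Y) I ?W"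
      using N1 X Y unfolding M_def by simp
    also have "\<dots> = ?a X Y ?W \<cdot> ((ide (TT X Y) \<otimes> lu C ?W) \<cdot> ?a (TT X Y) I ?W)"
      using X Y by simp
    also have "\<dots> = ?a X Y ?W \<cdot> (ru C (TT X Y) \<otimes> ide ?W)"
      using triangle[of "TT X Y" ?W] X Y by simp
    finally show ?thesis .
  qed
  have T1: "M \<cdot> (ide X \<otimes> ?a Y I ?W) = ide X \<otimes> (ru C Y \<otimes> ide ?W)"
    using interchange[of "ide X" "ide X" "?a Y I ?W" "ide Y \<otimes> lu C ?W"] triangle[of Y ?W] X Y
    unfolding M_def by simp
  have N2: "?a X Y ?W \<cdot> ((ide X \<otimes> ru C Y) \<otimes> ide ?W) = (ide X \<otimes> (ru C Y \<otimes> ide ?W)) \<cdot> ?a X (TT Y I) ?W"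
    using asc_nat[of "ide X" "ru C Y" "ide ?W"] X Y by simp
  define K where "K = (ide X \<otimes> ru C Y) \<cdot> asc C X Y I"
  have R: "M \<cdot> ((ide X \<otimes> ?a Y I ?W) \<cdot> (?a X (TT Y I) ?W \<cdot> (?a X Y I \<otimes> ide ?W)))
      = ?a X Y ?W \<cdot> (K \<otimes> ide ?W)"
  proof -
    have "M \<cdot> ((ide X \<otimes> ?a Y I ?W) \<cdot> (?a X (TT Y I) ?W \<cdot> (?a X Y I \<otimes> ide ?W)))
       = (ide X \<otimes> (ru C Y \<otimes> ide ?W)) \<cdot> (?a X (TT Y I) ?W \<cdot> (?a X Y I \<otimes> ide ?W))"
      using X Y unfolding M_def by (intro cm_rew[OF T1[unfolded M_def]]) simp_all
    also have "\<dots> = ((ide X \<otimes> (ru C Y \<otimes> ide ?W)) \<cdot> ?a X (TT Y I) ?W) \<cdot> (?a X Y I \<otimes> ide ?W)"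
      using X Y by simp
    also have "\<dots> = (?a X Y ?W \<cdot> ((ide X \<otimes> ru C Y) \<otimes> ide ?W)) \<cdot> (?a X Y I \<otimes> ide ?W)"
      using N2 by simp
    also have "\<dots> = ?a X Y ?W \<cdot> (((ide X \<otimes> ru C Y) \<otimes> ide ?W) \<cdot> (?a X Y I \<otimes> ide ?W))"
      using X Y by simp
    also have "\<dots> = ?a X Y ?W \<cdot> (K \<otimes> ide ?W)"
      using interchange[of "?a X Y I" "ide X \<otimes> ru C Y" "ide ?W" "ide ?W"] X Y unfolding K_def by simp
    finally show ?thesis .
  qed
  have E: "?a X Y ?W \<cdot> (ru C (TT X Y) \<otimes> ide ?W) = ?a X Y ?W \<cdot> (K \<otimes> ide ?W)"
    using L R P by simp
  have E2: "ru C (TT X Y) \<otimes> ide ?W = K \<otimes> ide ?W"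
  proof -
    have "asci C X Y ?W \<cdot> (?a X Y ?W \<cdot> (ru C (TT X Y) \<otimes> ide ?W)) = asci C X Y ?W \<cdot> (?a X Y ?W \<cdot> (K \<otimes> ide ?W))"
      using E by simp
    thus ?thesis using X Y asc_inv1[of X Y ?W] unfolding K_def
      by (simp add: cm_rew[OF asc_inv1[of X Y ?W]])
  qed
  show ?thesis using faith[OF _ _ _ _ E2[symmetric]] X Y unfolding K_def by simp
qed

end

context SM begin

definition valid where "valid A B p \<longleftrightarrow> snd p \<in> Ob \<and> fst p \<in> Ar \<and> d (fst p) = A \<and> c (fst p) = TT B (snd p)"

lemma tri_valid: "aux_tri C A B p q \<Longrightarrow> valid A B p \<and> valid A B q \<and> r (fst p) = r (fst q)"
  unfolding aux_tri_def valid_def hom_def by auto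

lemma Rsym: "symp (\<lambda>p q. aux_tri C A B p q \<or> aux_tri C A B q p)"
  by (auto intro: sympI)

lemma sim_equivp: "equivp (aux_sim C A B)"
  unfolding aux_sim_def by (rule equivp_rtranclp[OF Rsym])

lemma sim_refl: "aux_sim C A B p p"
  unfolding aux_sim_def by simp

lemma sim_sym: "aux_sim C A B p q \<Longrightarrow> aux_sim C A B q p"
  using sim_equivp by (meson equivp_symp)

lemma sim_trans: "aux_sim C A B p q \<Longrightarrow> aux_sim C A B q s \<Longrightarrow> aux_sim C A B p s"
  using sim_equivp by (meson equivp_transp)

lemma tri_sim: "aux_tri C A B p q \<Longrightarrow> aux_sim C A B p q"
  unfolding aux_sim_def by (rule r_into_rtranclp) simp

lemma sim_class: "aux_sim C A B p q \<Longrightarrow> aux_class C A B p = aux_class C A B q"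
  unfolding aux_class_def using sim_sym sim_trans by blast

lemma sim_valid: "aux_sim C A B p q \<Longrightarrow> valid A B p \<Longrightarrow> valid A B q \<and> r (fst q) = r (fst p)"
  unfolding aux_sim_def
proof (induction rule: rtranclp_induct)
  case base
  then show ?case by simp
next
  case (step y z)
  then show ?case using tri_valid by metis
qed

lemma rep_sim: "aux_sim C A B p (aux_rep (A, B, aux_class C A B p))"
proof -
  have "p \<in> aux_class C A B p" unfolding aux_class_def using sim_refl by simp
  hence "aux_rep (A, B, aux_class C A B p) \<in> aux_class C A B p"
    unfolding aux_rep_def by (metis someI snd_conv)
  thus ?thesis unfolding aux_class_def by simp
qed

definition cp where "cp D q p = (asc C D (snd q) (snd p) \<cdot> ((fst q \<otimes> ide (snd p)) \<cdot> fst p), TT (snd q) (snd p))"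

lemma cp_valid: "B \<in> Ob \<Longrightarrow> D \<in> Ob \<Longrightarrow> valid A B p \<Longrightarrow> valid B D q \<Longrightarrow> valid A D (cp D q p)"
  unfolding valid_def cp_def by auto

lemma sw: "g \<in> Ar \<Longrightarrow> h \<in> Ar \<Longrightarrow> (ide (c g) \<otimes> h) \<cdot> (g \<otimes> ide (d h)) = (g \<otimes> ide (c h)) \<cdot> (ide (d g) \<otimes> h)"
  using interchange[of g "ide (c g)" "ide (d h)" h] interchange[of "ide (d g)" g h "ide (c h)"] by simp

end

context SM begin

lemma comp_tri1:
  assumes AB: "A \<in> Ob" "B \<in> Ob" "D \<in> Ob" and t: "aux_tri C A B p p'" and q: "valid B D q"
  shows "aux_tri C A D (cp D q p) (cp D q p')"
proof -
  obtain f E where p: "p = (f, E)" by (cases p)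
  obtain f' E' where p': "p' = (f', E')" by (cases p')
  obtain g G where qq: "q = (g, G)" by (cases q)
  from t obtain h where h: "h \<in> Ar" "d h = E" "c h = E'" and fh: "(ide B \<otimes> h) \<cdot> f = f'"
    and rf: "r f = r f'" and vf: "valid A B p" and vf': "valid A B p'"
    using tri_valid[OF t] unfolding aux_tri_def p p' hom_def by auto
  have f: "f \<in> Ar" "d f = A" "c f = TT B E" "E \<in> Ob" using vf p unfolding valid_def by auto
  have f': "f' \<in> Ar" "d f' = A" "c f' = TT B E'" "E' \<in> Ob" using vf' p' unfolding valid_def by auto
  have g: "g \<in> Ar" "d g = B" "c g = TT D G" "G \<in> Ob" using q qq unfolding valid_def by auto
  note F = AB g h f f'
  have v1: "valid A D (cp D q p)" "valid A D (cp D q p')" using cp_valid AB vf vf' q by auto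
  have sw1: "(ide (TT D G) \<otimes> h) \<cdot> (g \<otimes> ide E) = (g \<otimes> ide E') \<cdot> (ide B \<otimes> h)"
    using sw[OF g(1) h(1)] g h by simp
  have eq: "(ide D \<otimes> (ide G \<otimes> h)) \<cdot> (asc C D G E \<cdot> ((g \<otimes> ide E) \<cdot> f))
      = asc C D G E' \<cdot> ((g \<otimes> ide E') \<cdot> f')"
  proof -
    have N: "asc C D G E' \<cdot> ((ide D \<otimes> ide G) \<otimes> h) = (ide D \<otimes> (ide G \<otimes> h)) \<cdot> asc C D G E"
      using asc_nat[of "ide D" "ide G" h] F by simp
    have "(ide D \<otimes> (ide G \<otimes> h)) \<cdot> (asc C D G E \<cdot> ((g \<otimes> ide E) \<cdot> f))
        = (asc C D G E' \<cdot> ((ide D \<otimes> ide G) \<otimes> h)) \<cdot> ((g \<otimes> ide E) \<cdot> f)"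
      using N F by simp
    also have "\<dots> = asc C D G E' \<cdot> (((ide (TT D G) \<otimes> h) \<cdot> (g \<otimes> ide E)) \<cdot> f)"
      using F by simp
    also have "\<dots> = asc C D G E' \<cdot> ((g \<otimes> ide E') \<cdot> ((ide B \<otimes> h) \<cdot> f))"
      using sw1 F by simp
    also have "\<dots> = asc C D G E' \<cdot> ((g \<otimes> ide E') \<cdot> f')" using fh by simp
    finally show ?thesis .
  qed
  have rr: "r (asc C D G E \<cdot> ((g \<otimes> ide E) \<cdot> f)) = r (asc C D G E' \<cdot> ((g \<otimes> ide E') \<cdot> f'))"
  proof -
    have "r (asc C D G E' \<cdot> ((g \<otimes> ide E') \<cdot> f')) = r ((g \<otimes> ide E') \<cdot> f')"
      using F by (intro r_total) auto
    also have "\<dots> = r (((ide (TT D G) \<otimes> h) \<cdot> (g \<otimes> ide E)) \<cdot> f)"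
      using sw1 fh F by simp
    also have "\<dots> = r ((ide (TT D G) \<otimes> h) \<cdot> ((g \<otimes> ide E) \<cdot> f))"
      using F by simp
    also have "\<dots> = r (r (ide (TT D G) \<otimes> h) \<cdot> ((g \<otimes> ide E) \<cdot> f))"
      using F by (intro rL[symmetric]) auto
    also have "\<dots> = r ((ide (TT D G) \<otimes> r h) \<cdot> ((g \<otimes> ide E) \<cdot> f))"
      using F by simp
    also have "\<dots> = r (((ide (TT D G) \<otimes> r h) \<cdot> (g \<otimes> ide E)) \<cdot> f)"
      using F by simp
    also have "\<dots> = r ((g \<otimes> ide E) \<cdot> ((ide B \<otimes> r h) \<cdot> f))"
      using sw[OF g(1) r_ar[OF h(1)]] F by simp
    also have "(ide B \<otimes> r h) \<cdot> f = f"
    proof -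
      have "r (ide B \<otimes> h) \<cdot> f = f \<cdot> r ((ide B \<otimes> h) \<cdot> f)" using F by (intro R4) auto
      thus ?thesis using fh rf[symmetric] F by simp
    qed
    also have "r ((g \<otimes> ide E) \<cdot> f) = r (asc C D G E \<cdot> ((g \<otimes> ide E) \<cdot> f))"
      using F by (intro r_total[symmetric]) auto
    finally show ?thesis by simp
  qed
  show ?thesis
    unfolding aux_tri_def
  proof (intro conjI)
    show "snd (cp D q p) \<in> Ob" "snd (cp D q p') \<in> Ob"
      "fst (cp D q p) \<in> hom C A (TT D (snd (cp D q p)))"
      "fst (cp D q p') \<in> hom C A (TT D (snd (cp D q p')))"
      using v1 unfolding valid_def hom_def by auto
    show "r (fst (cp D q p)) = r (fst (cp D q p'))" using rr unfolding cp_def p p' qq by simp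
    show "\<exists>h\<in>hom C (snd (cp D q p)) (snd (cp D q p')). tnsa C (ide D) h \<cdot> fst (cp D q p) = fst (cp D q p')"
      using eq g h unfolding cp_def p p' qq hom_def by (intro bexI[of _ "ide G \<otimes> h"]) auto
  qed
qed

end

context SM begin

lemma comp_tri2:
  assumes AB: "A \<in> Ob" "B \<in> Ob" "D \<in> Ob" and t: "aux_tri C B D q q'" and p: "valid A B p"
  shows "aux_tri C A D (cp D q p) (cp D q' p)"
proof -
  obtain f E where pp: "p = (f, E)" by (cases p)
  obtain g G where qq: "q = (g, G)" by (cases q)
  obtain g' G' where qq': "q' = (g', G')" by (cases q')
  from t obtain k where k: "k \<in> Ar" "d k = G" "c k = G'" and gk: "(ide D \<otimes> k) \<cdot> g = g'"
    and rg: "r g = r g'" and vg: "valid B D q" and vg': "valid B D q'"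
    using tri_valid[OF t] unfolding aux_tri_def qq qq' hom_def by auto
  have f: "f \<in> Ar" "d f = A" "c f = TT B E" "E \<in> Ob" using p pp unfolding valid_def by auto
  have g: "g \<in> Ar" "d g = B" "c g = TT D G" "G \<in> Ob" using vg qq unfolding valid_def by auto
  have g': "g' \<in> Ar" "d g' = B" "c g' = TT D G'" "G' \<in> Ob" using vg' qq' unfolding valid_def by auto
  note F = AB f g g' k
  have v1: "valid A D (cp D q p)" "valid A D (cp D q' p)" using cp_valid AB p vg vg' by auto
  have eq: "(ide D \<otimes> (k \<otimes> ide E)) \<cdot> (asc C D G E \<cdot> ((g \<otimes> ide E) \<cdot> f))
      = asc C D G' E \<cdot> ((g' \<otimes> ide E) \<cdot> f)"
  proof -
    have N: "asc C D G' E \<cdot> ((ide D \<otimes> k) \<otimes> ide E) = (ide D \<otimes> (k \<otimes> ide E)) \<cdot> asc C D G E"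
      using asc_nat[of "ide D" k "ide E"] F by simp
    have "(ide D \<otimes> (k \<otimes> ide E)) \<cdot> (asc C D G E \<cdot> ((g \<otimes> ide E) \<cdot> f))
        = (asc C D G' E \<cdot> ((ide D \<otimes> k) \<otimes> ide E)) \<cdot> ((g \<otimes> ide E) \<cdot> f)"
      using N F by simp
    also have "\<dots> = asc C D G' E \<cdot> ((((ide D \<otimes> k) \<otimes> ide E) \<cdot> (g \<otimes> ide E)) \<cdot> f)"
      using F by simp
    also have "((ide D \<otimes> k) \<otimes> ide E) \<cdot> (g \<otimes> ide E) = g' \<otimes> ide E"
      using interchange[of g "ide D \<otimes> k" "ide E" "ide E"] gk F by simp
    finally show ?thesis .
  qed
  have rr: "r (asc C D G E \<cdot> ((g \<otimes> ide E) \<cdot> f)) = r (asc C D G' E \<cdot> ((g' \<otimes> ide E) \<cdot> f))"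
  proof -
    have "r (asc C D G E \<cdot> ((g \<otimes> ide E) \<cdot> f)) = r ((g \<otimes> ide E) \<cdot> f)"
      using F by (intro r_total) auto
    also have "\<dots> = r (r (g \<otimes> ide E) \<cdot> f)" using F by (intro rL[symmetric]) auto
    also have "\<dots> = r (r (g' \<otimes> ide E) \<cdot> f)" using F rg by simp
    also have "\<dots> = r ((g' \<otimes> ide E) \<cdot> f)" using F by (intro rL) auto
    also have "\<dots> = r (asc C D G' E \<cdot> ((g' \<otimes> ide E) \<cdot> f))"
      using F by (intro r_total[symmetric]) auto
    finally show ?thesis .
  qed
  show ?thesis
    unfolding aux_tri_def
  proof (intro conjI)
    show "snd (cp D q p) \<in> Ob" "snd (cp D q' p) \<in> Ob"
      "fst (cp D q p) \<in> hom C A (TT D (snd (cp D q p)))"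
      "fst (cp D q' p) \<in> hom C A (TT D (snd (cp D q' p)))"
      using v1 unfolding valid_def hom_def by auto
    show "r (fst (cp D q p)) = r (fst (cp D q' p))" using rr unfolding cp_def pp qq qq' by simp
    show "\<exists>h\<in>hom C (snd (cp D q p)) (snd (cp D q' p)). tnsa C (ide D) h \<cdot> fst (cp D q p) = fst (cp D q' p)"
      using eq F unfolding cp_def pp qq qq' hom_def by (intro bexI[of _ "k \<otimes> ide E"]) auto
  qed
qed

lemma comp_sim1:
  assumes AB: "A \<in> Ob" "B \<in> Ob" "D \<in> Ob" and s: "aux_sim C A B p p'" and q: "valid B D q"
  shows "aux_sim C A D (cp D q p) (cp D q p')"
  using s unfolding aux_sim_def
proof (induction rule: rtranclp_induct)
  case base then show ?case by simp
next
  case (step y z)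
  then show ?case using comp_tri1[OF AB _ q]
    by (metis (mono_tags, lifting) rtranclp.rtrancl_into_rtrancl)
qed

lemma comp_sim2:
  assumes AB: "A \<in> Ob" "B \<in> Ob" "D \<in> Ob" and s: "aux_sim C B D q q'" and p: "valid A B p"
  shows "aux_sim C A D (cp D q p) (cp D q' p)"
  using s unfolding aux_sim_def
proof (induction rule: rtranclp_induct)
  case base then show ?case by simp
next
  case (step y z)
  then show ?case using comp_tri2[OF AB _ p]
    by (metis (mono_tags, lifting) rtranclp.rtrancl_into_rtrancl)
qed

end

context SM begin

lemma aux_comp_eq:
  assumes AB: "A \<in> Ob" "B \<in> Ob" "D \<in> Ob" and p: "valid A B p" and q: "valid B D q"
  shows "aux_comp C (B, D, aux_class C B D q) (A, B, aux_class C A B p) = (A, D, aux_class C A D (cp D q p))"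
proof -
  define p0 where "p0 = aux_rep (A, B, aux_class C A B p)"
  define q0 where "q0 = aux_rep (B, D, aux_class C B D q)"
  have sp: "aux_sim C A B p p0" unfolding p0_def by (rule rep_sim)
  have sq: "aux_sim C B D q q0" unfolding q0_def by (rule rep_sim)
  have vp0: "valid A B p0" using sim_valid[OF sp p] by simp
  have "aux_comp C (B, D, aux_class C B D q) (A, B, aux_class C A B p) = (A, D, aux_class C A D (cp D q0 p0))"
    unfolding aux_comp_def cp_def aux_dom_def aux_cod_def p0_def[symmetric] q0_def[symmetric]
    by (simp add: Let_def split: prod.split)
  also have "aux_class C A D (cp D q0 p0) = aux_class C A D (cp D q p)"
  proof -
    have "aux_sim C A D (cp D q p) (cp D q p0)" by (rule comp_sim1[OF AB sp q])
    moreover have "aux_sim C A D (cp D q p0) (cp D q0 p0)" by (rule comp_sim2[OF AB sq vp0])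
    ultimately show ?thesis using sim_class sim_trans sim_sym by metis
  qed
  finally show ?thesis .
qed

lemma aux_rst_eq:
  assumes p: "valid A B p"
  shows "aux_rst C (A, B, aux_class C A B p) = (A, A, aux_class C A A (rui C A \<cdot> r (fst p), I))"
proof -
  define p0 where "p0 = aux_rep (A, B, aux_class C A B p)"
  have sp: "aux_sim C A B p p0" unfolding p0_def by (rule rep_sim)
  have "r (fst p0) = r (fst p)" using sim_valid[OF sp p] by simp
  thus ?thesis unfolding aux_rst_def aux_dom_def p0_def[symmetric] by (simp add: Let_def)
qed

lemma aux_arr_iff: "x \<in> aux_arr C \<longleftrightarrow> (\<exists>A B p. x = (A, B, aux_class C A B p) \<and> A \<in> Ob \<and> B \<in> Ob \<and> valid A B p)"
  unfolding aux_arr_def valid_def hom_def by force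

lemma Klem:
  assumes AB: "A \<in> Ob" "B \<in> Ob" and v: "valid A B (w, U)"
  shows "aux_class C A B (asc C B U I \<cdot> (rui C (TT B U) \<cdot> w), TT U I) = aux_class C A B (w, U)"
proof -
  have w: "w \<in> Ar" "d w = A" "c w = TT B U" "U \<in> Ob" using v unfolding valid_def by auto
  have e: "(ide B \<otimes> ru C U) \<cdot> (asc C B U I \<cdot> (rui C (TT B U) \<cdot> w)) = w"
  proof -
    have "(ide B \<otimes> ru C U) \<cdot> (asc C B U I \<cdot> (rui C (TT B U) \<cdot> w)) = ((ide B \<otimes> ru C U) \<cdot> asc C B U I) \<cdot> (rui C (TT B U) \<cdot> w)"
      using AB w by simp
    also have "\<dots> = ru C (TT B U) \<cdot> (rui C (TT B U) \<cdot> w)" using kelly AB w by simp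
    also have "\<dots> = (ru C (TT B U) \<cdot> rui C (TT B U)) \<cdot> w" using AB w by simp
    also have "\<dots> = w" using ru_inv2 AB w by simp
    finally show ?thesis .
  qed
  have rr: "r (asc C B U I \<cdot> (rui C (TT B U) \<cdot> w)) = r w"
  proof -
    have "r (asc C B U I \<cdot> (rui C (TT B U) \<cdot> w)) = r (rui C (TT B U) \<cdot> w)"
      using AB w by (intro r_total) auto
    also have "\<dots> = r w" using AB w by (intro r_total) auto
    finally show ?thesis .
  qed
  have "aux_tri C A B (asc C B U I \<cdot> (rui C (TT B U) \<cdot> w), TT U I) (w, U)"
    unfolding aux_tri_def hom_def using AB w e rr by (simp, intro exI[of _ "ru C U"], simp)
  thus ?thesis using tri_sim sim_class by metis
qed

lemma rui_nat: "u \<in> Ar \<Longrightarrow> (u \<otimes> ide I) \<cdot> rui C (d u) = rui C (c u) \<cdot> u"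
proof -
  assume u: "u \<in> Ar"
  have "(u \<otimes> ide I) \<cdot> rui C (d u) = (rui C (c u) \<cdot> ru C (c u)) \<cdot> ((u \<otimes> ide I) \<cdot> rui C (d u))"
    using u ru_inv1 by simp
  also have "\<dots> = rui C (c u) \<cdot> ((ru C (c u) \<cdot> (u \<otimes> ide I)) \<cdot> rui C (d u))"
    using u by simp
  also have "\<dots> = rui C (c u) \<cdot> ((u \<cdot> ru C (d u)) \<cdot> rui C (d u))"
    by (simp only: ru_nat[OF u])
  also have "\<dots> = rui C (c u) \<cdot> u" using u ru_inv2 by simp
  finally show ?thesis .
qed

lemma precomp:
  assumes AB: "A \<in> Ob" "B \<in> Ob" and v: "valid A B (u, U)" and e: "e \<in> Ar" "d e = A" "c e = A"
  shows "aux_class C A B (cp B (u, U) (rui C A \<cdot> e, I)) = aux_class C A B (u \<cdot> e, U)"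
proof -
  have w: "u \<in> Ar" "d u = A" "c u = TT B U" "U \<in> Ob" using v unfolding valid_def by auto
  have "(u \<otimes> ide I) \<cdot> (rui C A \<cdot> e) = ((u \<otimes> ide I) \<cdot> rui C A) \<cdot> e" using AB w e by simp
  also have "\<dots> = (rui C (TT B U) \<cdot> u) \<cdot> e" using rui_nat[OF w(1)] w by simp
  also have "\<dots> = rui C (TT B U) \<cdot> (u \<cdot> e)" using AB w e by simp
  finally have "cp B (u, U) (rui C A \<cdot> e, I) = (asc C B U I \<cdot> (rui C (TT B U) \<cdot> (u \<cdot> e)), TT U I)"
    unfolding cp_def by simp
  moreover have "valid A B (u \<cdot> e, U)" using w e unfolding valid_def by simp
  ultimately show ?thesis using Klem[OF AB] by simp
qed

end

context SM begin

lemma rvalid: "A \<in> Ob \<Longrightarrow> f \<in> Ar \<Longrightarrow> d f = A \<Longrightarrow> valid A A (rui C A \<cdot> r f, I)"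
  unfolding valid_def by simp

lemma rst_comp: assumes "A \<in> Ob" "B \<in> Ob" "valid A B (u, U)" "f \<in> Ar" "d f = A"
  shows "aux_comp C (A, B, aux_class C A B (u, U)) (A, A, aux_class C A A (rui C A \<cdot> r f, I))
     = (A, B, aux_class C A B (u \<cdot> r f, U))"
  using aux_comp_eq[OF assms(1,1,2) rvalid[OF assms(1,4,5)] assms(3)] precomp[OF assms(1,2,3), of "r f"] assms
  by simp

lemma main_rs: "restriction_structure (aux_arr C) aux_dom aux_cod (aux_comp C) (aux_rst C)"
  unfolding restriction_structure_def
proof (intro conjI ballI impI)
  fix x assume "x \<in> aux_arr C"
  then obtain A B f E where x: "x = (A, B, aux_class C A B (f, E))" and AB: "A \<in> Ob" "B \<in> Ob"
    and v: "valid A B (f, E)" unfolding aux_arr_iff by auto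
  have f: "f \<in> Ar" "d f = A" "c f = TT B E" "E \<in> Ob" using v unfolding valid_def by auto
  have rx: "aux_rst C x = (A, A, aux_class C A A (rui C A \<cdot> r f, I))"
    unfolding x using aux_rst_eq[OF v] by simp
  show "aux_rst C x \<in> aux_arr C"
    unfolding rx aux_arr_iff using rvalid[OF AB(1) f(1,2)] AB by auto
  show "aux_dom (aux_rst C x) = aux_dom x" "aux_cod (aux_rst C x) = aux_dom x"
    unfolding rx aux_dom_def aux_cod_def using x by auto
  show "aux_comp C x (aux_rst C x) = x"
    unfolding rx using rst_comp[OF AB v f(1,2)] f x by simp
next
  fix x y assume "x \<in> aux_arr C" "y \<in> aux_arr C" and dd: "aux_dom x = aux_dom y"
  then obtain A B f E A' B' g G where x: "x = (A, B, aux_class C A B (f, E))" and AB: "A \<in> Ob" "B \<in> Ob"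
    and v: "valid A B (f, E)" and y: "y = (A', B', aux_class C A' B' (g, G))" and AB': "A' \<in> Ob" "B' \<in> Ob"
    and w: "valid A' B' (g, G)" unfolding aux_arr_iff by auto
  have AA: "A' = A" using dd x y unfolding aux_dom_def by simp
  have f: "f \<in> Ar" "d f = A" "c f = TT B E" "E \<in> Ob" using v unfolding valid_def by auto
  have g: "g \<in> Ar" "d g = A" "c g = TT B' G" "G \<in> Ob" using w AA unfolding valid_def by auto
  have rx: "aux_rst C x = (A, A, aux_class C A A (rui C A \<cdot> r f, I))"
    unfolding x using aux_rst_eq[OF v] by simp
  have ry: "aux_rst C y = (A, A, aux_class C A A (rui C A \<cdot> r g, I))"
    unfolding y AA using aux_rst_eq[OF w[unfolded AA]] by simp
  have e1: "aux_comp C (aux_rst C x) (aux_rst C y) = (A, A, aux_class C A A (rui C A \<cdot> r f \<cdot> r g, I))"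
    unfolding rx ry using rst_comp[OF AB(1) AB(1) rvalid[OF AB(1) f(1,2)] g(1,2)] AB f g by simp
  have e2: "aux_comp C (aux_rst C y) (aux_rst C x) = (A, A, aux_class C A A (rui C A \<cdot> r g \<cdot> r f, I))"
    unfolding rx ry using rst_comp[OF AB(1) AB(1) rvalid[OF AB(1) g(1,2)] f(1,2)] AB f g by simp
  show "aux_comp C (aux_rst C x) (aux_rst C y) = aux_comp C (aux_rst C y) (aux_rst C x)"
    unfolding e1 e2 using R2[OF f(1) g(1)] f g by simp
  have cyx: "aux_comp C y (aux_rst C x) = (A, B', aux_class C A B' (g \<cdot> r f, G))"
    unfolding rx y AA using rst_comp[OF AB(1) AB'(2) w[unfolded AA] f(1,2)] by simp
  have vv: "valid A B' (g \<cdot> r f, G)" using f g unfolding valid_def by simp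
  show "aux_rst C (aux_comp C y (aux_rst C x)) = aux_comp C (aux_rst C y) (aux_rst C x)"
    unfolding cyx e2 using aux_rst_eq[OF vv] R3[OF f(1) g(1)] f g by simp
next
  fix x y assume "x \<in> aux_arr C" "y \<in> aux_arr C" and dd: "aux_dom y = aux_cod x"
  then obtain A B f E B' D g G where x: "x = (A, B, aux_class C A B (f, E))" and AB: "A \<in> Ob" "B \<in> Ob"
    and v: "valid A B (f, E)" and y: "y = (B', D, aux_class C B' D (g, G))" and AB': "B' \<in> Ob" "D \<in> Ob"
    and w: "valid B' D (g, G)" unfolding aux_arr_iff by auto
  have BB: "B' = B" using dd x y unfolding aux_dom_def aux_cod_def by simp
  have f: "f \<in> Ar" "d f = A" "c f = TT B E" "E \<in> Ob" using v unfolding valid_def by auto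
  have g: "g \<in> Ar" "d g = B" "c g = TT D G" "G \<in> Ob" using w BB unfolding valid_def by auto
  note F = AB AB' f g
  have ry: "aux_rst C y = (B, B, aux_class C B B (rui C B \<cdot> r g, I))"
    unfolding y BB using aux_rst_eq[OF w[unfolded BB]] by simp
  define m where "m = asc C D G E \<cdot> ((g \<otimes> ide E) \<cdot> f)"
  have cyx: "aux_comp C y x = (A, D, aux_class C A D (m, TT G E))"
    unfolding x y BB m_def using aux_comp_eq[OF AB AB'(2) v w[unfolded BB]] unfolding cp_def by simp
  have vm: "valid A D (m, TT G E)" using F unfolding valid_def m_def by simp
  have L: "aux_comp C (aux_rst C y) x = (A, B, aux_class C A B (cp B (rui C B \<cdot> r g, I) (f, E)))"
    unfolding ry x using aux_comp_eq[OF AB AB(2) v rvalid[OF AB(2) g(1,2)]] by simp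
  have R: "aux_comp C x (aux_rst C (aux_comp C y x)) = (A, B, aux_class C A B (f \<cdot> r m, E))"
    unfolding cyx aux_rst_eq[OF vm] using rst_comp[OF AB v, of m] vm x unfolding valid_def by simp
  define n where "n = asc C B I E \<cdot> (((rui C B \<cdot> r g) \<otimes> ide E) \<cdot> f)"
  have rm: "r m = r ((g \<otimes> ide E) \<cdot> f)" unfolding m_def using F by (intro r_total) auto
  have eq: "(ide B \<otimes> lu C E) \<cdot> n = f \<cdot> r m"
  proof -
    have "(ide B \<otimes> lu C E) \<cdot> n = ((ide B \<otimes> lu C E) \<cdot> asc C B I E) \<cdot> (((rui C B \<cdot> r g) \<otimes> ide E) \<cdot> f)"
      unfolding n_def using F by simp
    also have "\<dots> = (ru C B \<otimes> ide E) \<cdot> (((rui C B \<cdot> r g) \<otimes> ide E) \<cdot> f)"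
      using triangle F by simp
    also have "\<dots> = ((ru C B \<otimes> ide E) \<cdot> ((rui C B \<cdot> r g) \<otimes> ide E)) \<cdot> f"
      using F by simp
    also have "(ru C B \<otimes> ide E) \<cdot> ((rui C B \<cdot> r g) \<otimes> ide E) = r g \<otimes> ide E"
    proof -
      have "(ru C B \<otimes> ide E) \<cdot> ((rui C B \<cdot> r g) \<otimes> ide E) = (ru C B \<cdot> (rui C B \<cdot> r g)) \<otimes> ide E"
        using interchange[of "rui C B \<cdot> r g" "ru C B" "ide E" "ide E"] F by simp
      also have "ru C B \<cdot> (rui C B \<cdot> r g) = r g"
        using F ru_inv2[of B] assoc[of "r g" "rui C B" "ru C B"] by simp
      finally show ?thesis .
    qed
    also have "(r g \<otimes> ide E) \<cdot> f = f \<cdot> r ((g \<otimes> ide E) \<cdot> f)"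
      using R4[of f "g \<otimes> ide E"] F by simp
    finally show ?thesis using rm by simp
  qed
  have rn: "r n = r (f \<cdot> r m)"
  proof -
    have a0: "r n = r (((rui C B \<cdot> r g) \<otimes> ide E) \<cdot> f)"
      unfolding n_def using F by (intro r_total) auto
    have a1: "r n = r (r ((rui C B \<cdot> r g) \<otimes> ide E) \<cdot> f)"
      unfolding a0 using F by (intro rL[symmetric]) auto
    have a2: "r (rui C B \<cdot> r g) = r g" using F by (subst r_total) auto
    have a3: "r ((rui C B \<cdot> r g) \<otimes> ide E) = r (g \<otimes> ide E)" using a2 F by simp
    have "r n = r (r (g \<otimes> ide E) \<cdot> f)" using a1 a3 by simp
    also have "\<dots> = r ((g \<otimes> ide E) \<cdot> f)" using F by (intro rL) auto
    also have "\<dots> = r f \<cdot> r ((g \<otimes> ide E) \<cdot> f)" using r_absorb(2)[of f "g \<otimes> ide E"] F by simp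
    also have "\<dots> = r (f \<cdot> r ((g \<otimes> ide E) \<cdot> f))" using R3[of "(g \<otimes> ide E) \<cdot> f" f] F by simp
    finally show ?thesis using rm by simp
  qed
  have "aux_tri C A B (n, TT I E) (f \<cdot> r m, E)"
    unfolding aux_tri_def hom_def using F eq rn unfolding n_def m_def
    by (simp, intro exI[of _ "lu C E"], simp)
  hence "aux_class C A B (n, TT I E) = aux_class C A B (f \<cdot> r m, E)" using tri_sim sim_class by metis
  thus "aux_comp C (aux_rst C y) x = aux_comp C x (aux_rst C (aux_comp C y x))"
    unfolding L R cp_def n_def by simp
qed

end

theorem proposition3p6:
  fixes C :: "('o, 'm) smrc"
  assumes "is_smrc C"
  shows "(\<forall>A\<in>obj C. \<forall>B\<in>obj C. \<forall>E\<in>obj C. \<forall>E'\<in>obj C. \<forall>f f'.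
            f \<in> hom C A (tns C B E) \<longrightarrow> f' \<in> hom C A (tns C B E') \<longrightarrow>
            aux_sim C A B (f, E) (f', E') \<longrightarrow>
            aux_class C A A (cmp C (rui C A) (rst C f), unt C)
            = aux_class C A A (cmp C (rui C A) (rst C f'), unt C))
         \<and> restriction_structure (aux_arr C) aux_dom aux_cod (aux_comp C) (aux_rst C)"
proof -
  interpret SM C by (rule SM.intro[OF assms])
  have 1: "rst C f = rst C f'" if "E \<in> obj C" "f \<in> hom C A (tns C B E)" "aux_sim C A B (f, E) (f', E')" for A B E E' f f'
    using sim_valid[OF that(3)] that(1,2) unfolding valid_def hom_def by auto
  show ?thesis using 1 main_rs by metis
qed

end
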